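(* Let $(M,\rho)$ be a metric space and $f:[a,b]\to M$ continuous. Suppose $md(f,x)$ exists for almost every $x\in[a,b]$, $x\mapsto md(f,x)$ is Lebesgue integrable on $[a,b]$, and $f$ has property $(N)$. Then $f$ is absolutely continuous on $[a,b]$.
   Context: $md(f,x)=\lim_{t\to0,\ x+t\in[a,b]}\rho(f(x+t),f(x))/|t|$ when it exists. Property $(N)$: $\mathcal H^1(f(B))=0$ whenever $B\subset[a,b]$ has Lebesgue measure $0$, $\mathcal H^1$ being one-dimensional Hausdorff measure on $M$. Absolute continuity of $f$: for every $\varepsilon>0$ there is $\delta>0$ such that for non-overlapping intervals $[a_i,b_i]\subset[a,b]$ with $\sum_i(b_i-a_i)<\delta$ one has $\sum_i\rho(f(b_i),f(a_i))<\varepsilon$. *)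

theory Defs
  imports "HOL-Analysis.Analysis"
begin

definition md_exists :: "(real \<Rightarrow> 'a::metric_space) \<Rightarrow> real \<Rightarrow> real \<Rightarrow> real \<Rightarrow> bool" where
  "md_exists f a b x \<longleftrightarrow>
     (\<exists>L. ((\<lambda>t. dist (f (x + t)) (f x) / \<bar>t\<bar>) \<longlongrightarrow> L) (at 0 within {t. x + t \<in> {a..b}}))"

definition md :: "(real \<Rightarrow> 'a::metric_space) \<Rightarrow> real \<Rightarrow> real \<Rightarrow> real \<Rightarrow> real" where
  "md f a b x = Lim (at 0 within {t. x + t \<in> {a..b}}) (\<lambda>t. dist (f (x + t)) (f x) / \<bar>t\<bar>)"

definition hausdorff1_delta :: "real \<Rightarrow> 'a::metric_space set \<Rightarrow> ennreal" where
  "hausdorff1_delta \<delta> A =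
     (INF C \<in> {C :: nat \<Rightarrow> 'a set. A \<subseteq> (\<Union>i. C i) \<and> (\<forall>i. bounded (C i) \<and> diameter (C i) \<le> \<delta>)}.
        (\<Sum>i. ennreal (diameter (C i))))"

definition hausdorff1 :: "'a::metric_space set \<Rightarrow> ennreal" where
  "hausdorff1 A = (SUP \<delta> \<in> {0<..}. hausdorff1_delta \<delta> A)"

definition property_N :: "(real \<Rightarrow> 'a::metric_space) \<Rightarrow> real \<Rightarrow> real \<Rightarrow> bool" where
  "property_N f a b \<longleftrightarrow> (\<forall>B. B \<subseteq> {a..b} \<and> B \<in> null_sets lebesgue \<longrightarrow> hausdorff1 (f ` B) = 0)"

definition abs_cont_metric :: "(real \<Rightarrow> 'a::metric_space) \<Rightarrow> real \<Rightarrow> real \<Rightarrow> bool" where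
  "abs_cont_metric f a b \<longleftrightarrow>
     (\<forall>\<epsilon>>0. \<exists>\<delta>>0. \<forall>(n::nat) (as::nat \<Rightarrow> real) (bs::nat \<Rightarrow> real).
        (\<forall>i<n. a \<le> as i \<and> as i \<le> bs i \<and> bs i \<le> b) \<and>
        (\<forall>i<n. \<forall>j<n. i \<noteq> j \<longrightarrow> bs i \<le> as j \<or> bs j \<le> as i) \<and>
        (\<Sum>i<n. bs i - as i) < \<delta>
        \<longrightarrow> (\<Sum>i<n. dist (f (bs i)) (f (as i))) < \<epsilon>)"

end

theory Submission
  imports Defs
begin

lemma ivt_dist:
  fixes f :: "real \<Rightarrow> 'a::metric_space"
  assumes "continuous_on {c..d} f" "c \<le> d"
  shows "{0..dist (f c) (f d)} \<subseteq> (\<lambda>t. dist (f c) (f t)) ` {c..d}"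
proof -
  have "continuous_on {c..d} (\<lambda>t. dist (f c) (f t))"
    by (intro continuous_intros assms)
  then have "connected ((\<lambda>t. dist (f c) (f t)) ` {c..d})"
    by (intro connected_continuous_image) auto
  moreover have "0 \<in> (\<lambda>t. dist (f c) (f t)) ` {c..d}" "dist (f c) (f d) \<in> (\<lambda>t. dist (f c) (f t)) ` {c..d}"
    using assms by (force, force)
  ultimately show ?thesis
    by (meson connected_contains_Icc)
qed

lemma md_nontriv:
  assumes "a < b" "x \<in> {a..b}"
  shows "\<not> trivial_limit (at (0::real) within {t. x + t \<in> {a..b}})"
proof -
  have eq: "{t. x + t \<in> {a..b}} = {a - x..b - x}" by auto
  show ?thesis unfolding eq trivial_limit_within
    using assms by (auto simp: islimpt_Icc)
qed

lemma md_local: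
  fixes f :: "real \<Rightarrow> 'a::metric_space"
  assumes "a < b" "x \<in> {a..b}" "md_exists f a b x" "md f a b x < B"
  shows "\<exists>\<rho>>0. \<forall>y\<in>{a..b}. \<bar>y - x\<bar> < \<rho> \<longrightarrow> dist (f y) (f x) \<le> B * \<bar>y - x\<bar>"
proof -
  let ?F = "at (0::real) within {t. x + t \<in> {a..b}}"
  obtain L where L: "((\<lambda>t. dist (f (x + t)) (f x) / \<bar>t\<bar>) \<longlongrightarrow> L) ?F"
    using assms(3) unfolding md_exists_def by blast
  have "md f a b x = L"
    unfolding md_def using L md_nontriv[OF assms(1,2)] by (simp add: tendsto_Lim)
  then have "L < B" using assms by simp
  then have "\<forall>\<^sub>F t in ?F. dist (f (x + t)) (f x) / \<bar>t\<bar> < B"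
    using L order_tendstoD(2) by blast
  then obtain \<rho> where \<rho>: "\<rho> > 0" "\<And>t. t \<in> {t. x + t \<in> {a..b}} \<Longrightarrow> t \<noteq> 0 \<Longrightarrow> dist t 0 < \<rho> \<Longrightarrow> dist (f (x + t)) (f x) / \<bar>t\<bar> < B"
    unfolding eventually_at by blast
  show ?thesis
  proof (intro exI conjI ballI impI)
    fix y assume y: "y \<in> {a..b}" "\<bar>y - x\<bar> < \<rho>"
    show "dist (f y) (f x) \<le> B * \<bar>y - x\<bar>"
    proof (cases "y = x")
      case False
      then have "dist (f (x + (y - x))) (f x) / \<bar>y - x\<bar> < B"
        using y by (intro \<rho>(2)) auto
      then show ?thesis using False by (simp add: divide_simps split: if_splits)
    qed simp
  qed (use \<rho> in auto)
qed


lemma emeasure_lebesgue_Icc: "emeasure lebesgue {l..u::real} = ennreal (if l \<le> u then u - l else 0)"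
  by (simp add: emeasure_completion emeasure_lborel_Icc_eq)

lemma hausdorff1_zero_cover:
  assumes "hausdorff1 X = 0" "e > 0"
  shows "\<exists>C::nat \<Rightarrow> 'a::metric_space set. X \<subseteq> (\<Union>i. C i) \<and> (\<forall>i. bounded (C i)) \<and> (\<Sum>i. ennreal (diameter (C i))) < ennreal e"
proof -
  have "hausdorff1_delta 1 X = 0"
    using assms(1) unfolding hausdorff1_def bot_ennreal[symmetric] SUP_bot_conv by auto
  then have "hausdorff1_delta 1 X < ennreal e" using assms(2) by simp
  then show ?thesis unfolding hausdorff1_delta_def INF_less_iff by blast
qed

lemma null_img:
  fixes f :: "real \<Rightarrow> 'a::metric_space"
  assumes "property_N f a b" "Z \<subseteq> {a..b}" "negligible Z"
  shows "negligible ((\<lambda>t. dist p (f t)) ` Z)"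
  unfolding negligible_outer_le
proof (intro allI impI)
  fix e :: real assume e: "e > 0"
  have "hausdorff1 (f ` Z) = 0"
    using assms unfolding property_N_def negligible_iff_null_sets by blast
  then obtain C :: "nat \<Rightarrow> 'a set" where C: "f ` Z \<subseteq> (\<Union>i. C i)" "\<And>i. bounded (C i)"
     "(\<Sum>i. ennreal (diameter (C i))) < ennreal (e/2)"
    using hausdorff1_zero_cover[of "f ` Z" "e/2"] e by auto
  define J where "J i = (if C i = {} then {} else
     {dist p (SOME x. x \<in> C i) - diameter (C i) .. dist p (SOME x. x \<in> C i) + diameter (C i)})" for i
  have Jsets: "J i \<in> sets lebesgue" for i unfolding J_def by auto
  have JE: "emeasure lebesgue (J i) \<le> 2 * ennreal (diameter (C i))" for i
    unfolding J_def using diameter_ge_0[OF C(2)[of i]]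
    by (auto simp: emeasure_lebesgue_Icc ennreal_mult)
  have sub: "(\<lambda>t. dist p (f t)) ` Z \<subseteq> (\<Union>i. J i)"
  proof
    fix y assume "y \<in> (\<lambda>t. dist p (f t)) ` Z"
    then obtain t where t: "t \<in> Z" "y = dist p (f t)" by blast
    then obtain i where i: "f t \<in> C i" using C(1) by blast
    then have ne: "C i \<noteq> {}" by blast
    let ?s = "SOME x. x \<in> C i"
    have s: "?s \<in> C i" using i by (rule someI)
    have "dist (f t) ?s \<le> diameter (C i)"
      using diameter_bounded_bound[OF C(2) i s] .
    then have "y \<in> J i"
      unfolding J_def t(2) using ne dist_triangle[of p "f t" ?s] dist_triangle[of p ?s "f t"]
      by (auto simp: dist_commute)
    then show "y \<in> (\<Union>i. J i)" by blast
  qed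
  have "emeasure lebesgue (\<Union>i. J i) \<le> (\<Sum>i. emeasure lebesgue (J i))"
    by (rule emeasure_subadditive_countably) (use Jsets in auto)
  also have "\<dots> \<le> (\<Sum>i. 2 * ennreal (diameter (C i)))"
    by (intro suminf_le JE) auto
  also have "\<dots> = 2 * (\<Sum>i. ennreal (diameter (C i)))"
    by (rule ennreal_suminf_cmult)
  also have "\<dots> \<le> 2 * ennreal (e/2)"
    using C(3) by (intro mult_left_mono) auto
  also have "\<dots> = ennreal e" using e by (subst ennreal_numeral[symmetric], subst ennreal_mult[symmetric]) auto
  finally have le: "emeasure lebesgue (\<Union>i. J i) \<le> ennreal e" .
  have m: "(\<Union>i. J i) \<in> sets lebesgue" using Jsets by auto
  have "(\<Union>i. J i) \<in> lmeasurable"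
    using le m by (intro fmeasurableI) (auto intro: le_less_trans)
  moreover have "measure lebesgue (\<Union>i. J i) \<le> e"
    using le e by (simp add: measure_def enn2real_leI)
  ultimately show "\<exists>T. (\<lambda>t. dist p (f t)) ` Z \<subseteq> T \<and> T \<in> lmeasurable \<and> measure lebesgue T \<le> e"
    using sub by blast
qed

lemma measure_lebesgue_Icc: "l \<le> u \<Longrightarrow> measure lebesgue {l..u::real} = u - l"
  by (simp add: measure_completion)

lemma measure_lebesgue_ball_real: "0 \<le> r \<Longrightarrow> measure lebesgue (ball (x::real) r) = 2 * r"
proof -
  assume r: "0 \<le> r"
  have "ball x r = {x - r<..<x + r}" by (auto simp: dist_real_def)
  then show ?thesis using r by (simp add: measure_completion)
qed

lemma loc_img:
  fixes H :: "real \<Rightarrow> real"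
  assumes S: "S \<in> lmeasurable" and B: "B \<ge> 0" and d: "d > 0"
  and loc: "\<And>x. x \<in> S \<Longrightarrow> \<exists>\<rho>>0. \<forall>y\<in>S. \<bar>y - x\<bar> < \<rho> \<longrightarrow> \<bar>H y - H x\<bar> \<le> B * \<bar>y - x\<bar>"
  and neg: "\<And>Z. Z \<subseteq> S \<Longrightarrow> negligible Z \<Longrightarrow> negligible (H ` Z)"
  shows "\<exists>T. H ` S \<subseteq> T \<and> T \<in> lmeasurable \<and> measure lebesgue T \<le> B * (measure lebesgue S + d)"
proof -
  obtain U where U: "open U" "S \<subseteq> U" "(U - S) \<in> lmeasurable" "emeasure lebesgue (U - S) < ennreal d"
    using S d sets_lebesgue_outer_open by (metis fmeasurableD)
  then have "measure lebesgue (U - S) < d"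
    by (metis emeasure_eq_measure2 ennreal_leI not_less)
  with S U have "U \<in> lmeasurable" and Uless: "measure lebesgue U < measure lebesgue S + d"
    by (auto simp: measurable_measure_Diff dest!: fmeasurable_Diff_D)
  obtain \<rho> where \<rho>: "\<And>x. x \<in> S \<Longrightarrow> \<rho> x > 0 \<and> (\<forall>y\<in>S. \<bar>y - x\<bar> < \<rho> x \<longrightarrow> \<bar>H y - H x\<bar> \<le> B * \<bar>y - x\<bar>)"
    using loc by metis
  have "\<forall>x\<in>S. \<exists>l>0. ball x l \<subseteq> U" using U by (meson openE subsetD)
  then obtain l where l: "\<And>x. x \<in> S \<Longrightarrow> l x > 0 \<and> ball x (l x) \<subseteq> U" by metis
  define r where "r x t = min (min (\<rho> x) (l x)) (t/2)" for x t
  define K where "K = {(x, r x t) | x (t::real). x \<in> S \<and> 0 < t}"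
  obtain C where C: "countable C" "C \<subseteq> K"
     "pairwise (\<lambda>i j. disjnt (ball (fst i) (snd i)) (ball (fst j) (snd j))) C"
     "negligible (S - (\<Union>i\<in>C. ball (fst i) (snd i)))"
  proof (rule Vitali_covering_theorem_balls[of S K fst snd])
    fix x and t :: real assume xt: "x \<in> S" "0 < t"
    have "r x t > 0" using \<rho>[OF xt(1)] l[OF xt(1)] xt(2) by (simp add: r_def)
    moreover have "r x t < t" using xt(2) by (simp add: r_def)
    ultimately show "\<exists>i. i \<in> K \<and> x \<in> ball (fst i) (snd i) \<and> snd i < t"
      using xt unfolding K_def by (intro exI[of _ "(x, r x t)"]) auto
  qed auto
  have Cprop: "fst i \<in> S \<and> 0 < snd i \<and> snd i \<le> \<rho> (fst i) \<and> ball (fst i) (snd i) \<subseteq> U" if iC: "i \<in> C" for i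
  proof -
    obtain x and t :: real where xt: "i = (x, r x t)" "x \<in> S" "0 < t" using iC C(2) unfolding K_def by blast
    have "r x t \<le> l x" by (simp add: r_def)
    then have "ball x (r x t) \<subseteq> U" using l[OF xt(2)] by (meson order_trans subset_ball)
    then show ?thesis using xt \<rho>[OF xt(2)] l[OF xt(2)] by (auto simp: r_def)
  qed
  define J where "J i = {H (fst i) - B * snd i .. H (fst i) + B * snd i}" for i
  let ?Z = "S - (\<Union>i\<in>C. ball (fst i) (snd i))"
  have cov: "H ` S \<subseteq> (\<Union>i\<in>C. J i) \<union> H ` ?Z"
  proof
    fix y assume "y \<in> H ` S"
    then obtain x where x: "x \<in> S" "y = H x" by blast
    show "y \<in> (\<Union>i\<in>C. J i) \<union> H ` ?Z"
    proof (cases "x \<in> ?Z")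
      case False
      then obtain i where i: "i \<in> C" "x \<in> ball (fst i) (snd i)" using x by blast
      have ci: "fst i \<in> S" "0 < snd i" "snd i \<le> \<rho> (fst i)" using Cprop[OF i(1)] by auto
      have "\<bar>x - fst i\<bar> < snd i" using i(2) by (simp add: dist_real_def abs_minus_commute)
      then have "\<bar>H x - H (fst i)\<bar> \<le> B * \<bar>x - fst i\<bar>"
        using \<rho>[OF ci(1)] x(1) ci(3) by auto
      also have "\<dots> \<le> B * snd i"
        using \<open>\<bar>x - fst i\<bar> < snd i\<close> B by (intro mult_left_mono) auto
      finally have "y \<in> J i" unfolding J_def x(2) by (auto simp: abs_le_iff)
      then show ?thesis using i(1) by blast
    qed (use x in auto)
  qed
  have Jm: "J i \<in> lmeasurable" for i unfolding J_def by simp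
  have bound: "measure lebesgue (\<Union>i\<in>C'. J i) \<le> B * measure lebesgue U" if "C' \<subseteq> C" "finite C'" for C'
  proof -
    have "measure lebesgue (\<Union>i\<in>C'. J i) \<le> (\<Sum>i\<in>C'. measure lebesgue (J i))"
      by (rule measure_UNION_le) (use that Jm in auto)
    also have "\<dots> = (\<Sum>i\<in>C'. B * measure lebesgue (ball (fst i) (snd i)))"
    proof (rule sum.cong)
      fix i assume "i \<in> C'"
      then have "0 < snd i" using Cprop that by blast
      then show "measure lebesgue (J i) = B * measure lebesgue (ball (fst i) (snd i))"
      proof -
        have "measure lebesgue (ball (fst i) (snd i)) = 2 * snd i"
          using \<open>0 < snd i\<close> by (intro measure_lebesgue_ball_real) simp
        moreover have "measure lebesgue (J i) = 2 * B * snd i"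
          unfolding J_def using B \<open>0 < snd i\<close> by (subst measure_lebesgue_Icc) (auto simp: algebra_simps)
        ultimately show ?thesis by simp
      qed
    qed simp
    also have "\<dots> = B * measure lebesgue (\<Union>i\<in>C'. ball (fst i) (snd i))"
      by (subst measure_UNION') (use that C(3) in \<open>auto simp: sum_distrib_left intro: pairwise_subset\<close>)
    also have "\<dots> \<le> B * measure lebesgue U"
      using that Cprop \<open>U \<in> lmeasurable\<close> B
      by (intro mult_left_mono measure_mono_fmeasurable) (auto simp: fmeasurableD)
    finally show ?thesis .
  qed
  have UJm: "(\<Union>i\<in>C. J i) \<in> lmeasurable"
    by (rule fmeasurable_UN_bound[OF C(1) _ bound]) (use Jm in auto)
  have UJ: "measure lebesgue (\<Union>i\<in>C. J i) \<le> B * measure lebesgue U"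
    by (rule measure_UN_bound[OF C(1) _ bound]) (use Jm in auto)
  have negZ: "negligible (H ` ?Z)" by (rule neg) (use C(4) in auto)
  let ?T = "(\<Union>i\<in>C. J i) \<union> H ` ?Z"
  have Tm: "?T \<in> lmeasurable" using UJm negZ by (simp add: negligible_imp_measurable fmeasurable.Un)
  have "measure lebesgue ?T \<le> measure lebesgue (\<Union>i\<in>C. J i) + measure lebesgue (H ` ?Z)"
    using UJm negZ by (intro measure_Un_le) (auto simp: fmeasurableD negligible_imp_measurable)
  also have "\<dots> = measure lebesgue (\<Union>i\<in>C. J i)" using negZ by (simp add: negligible_imp_measure0)
  also have "\<dots> \<le> B * (measure lebesgue S + d)"
    using UJ Uless B by (smt (verit) mult_left_mono)
  finally show ?thesis using cov Tm by blast
qed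

lemma main_ineq:
  fixes f :: "real \<Rightarrow> 'a::metric_space" and g :: "real \<Rightarrow> real"
  assumes ab: "a < b" and cont: "continuous_on {a..b} f" and PN: "property_N f a b"
    and G: "G \<in> sets lebesgue" "G \<subseteq> {a..b}" "negligible ({a..b} - G)" "\<And>x. x \<in> G \<Longrightarrow> md_exists f a b x"
    and gi: "integrable lebesgue g" and g0: "\<And>x. 0 \<le> g x" and gmd: "\<And>x. x \<in> G \<Longrightarrow> md f a b x \<le> g x"
    and cd: "a \<le> c" "c \<le> d" "d \<le> b"
  shows "dist (f c) (f d) \<le> integral\<^sup>L lebesgue (\<lambda>x. indicator {c..<d} x * g x)"
proof -
  define h where "h t = dist (f c) (f t)" for t
  define I where "I = integral\<^sup>L lebesgue (\<lambda>x. indicator {c..<d} x * g x)"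
  define D where "D = dist (f c) (f d)"
  define E where "E = G \<inter> {c..<d}"
  have Em: "E \<in> sets lebesgue" unfolding E_def using G(1) by auto
  have EG: "E \<subseteq> G" and Ecd: "E \<subseteq> {c..<d}" unfolding E_def by auto
  have gm: "g \<in> borel_measurable lebesgue" using gi by (rule borel_measurable_integrable)
  have icg: "integrable lebesgue (\<lambda>x. indicator {c..<d} x * g x)"
    using integrable_mult_indicator[OF _ gi, of "{c..<d}"] by simp
  have Dpos: "0 \<le> D" unfolding D_def by simp
  have key: "D \<le> I + e * (d - c + 2)" if e: "e > 0" for e
  proof -
    define Ek where "Ek k = {x \<in> E. real k * e \<le> g x \<and> g x < real (Suc k) * e}" for k :: nat
    have Ekm: "Ek k \<in> sets lebesgue" for k
    proof -
      have "Ek k = E \<inter> (g -` {real k * e..<real (Suc k) * e} \<inter> space lebesgue)"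
        unfolding Ek_def by auto
      also have "\<dots> \<in> sets lebesgue"
        using Em gm by (intro sets.Int measurable_sets) auto
      finally show ?thesis .
    qed
    have Ekl: "Ek k \<in> lmeasurable" for k
    proof (rule bounded_set_imp_lmeasurable[OF _ Ekm])
      show "bounded (Ek k)"
        by (rule bounded_subset[of "{c..d}"]) (use Ecd in \<open>auto simp: Ek_def\<close>)
    qed
    have EkE: "Ek k \<subseteq> E" for k unfolding Ek_def by auto
    have "\<exists>T. h ` Ek k \<subseteq> T \<and> T \<in> lmeasurable \<and>
        measure lebesgue T \<le> (real (Suc k) * e) * (measure lebesgue (Ek k) + (1/2)^k / real (Suc k))" for k
    proof (rule loc_img[OF Ekl])
      show "0 \<le> real (Suc k) * e" using e by simp
      show "0 < (1/2::real)^k / real (Suc k)" by simp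
    next
      fix x assume x: "x \<in> Ek k"
      have xG: "x \<in> G" using x EkE[of k] EG by blast
      have xab: "x \<in> {a..b}" using xG G(2) by blast
      have "md f a b x < real (Suc k) * e"
        using gmd[OF xG] x unfolding Ek_def by auto
      then obtain \<rho> where \<rho>: "\<rho> > 0" "\<And>y. y \<in> {a..b} \<Longrightarrow> \<bar>y - x\<bar> < \<rho> \<Longrightarrow> dist (f y) (f x) \<le> real (Suc k) * e * \<bar>y - x\<bar>"
        using md_local[OF ab xab G(4)[OF xG]] by blast
      show "\<exists>\<rho>>0. \<forall>y\<in>Ek k. \<bar>y - x\<bar> < \<rho> \<longrightarrow> \<bar>h y - h x\<bar> \<le> real (Suc k) * e * \<bar>y - x\<bar>"
      proof (intro exI conjI ballI impI)
        fix y assume y: "y \<in> Ek k" "\<bar>y - x\<bar> < \<rho>"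
        have yab: "y \<in> {a..b}" using y(1) EkE[of k] EG G(2) by blast
        have "\<bar>h y - h x\<bar> \<le> dist (f y) (f x)"
          unfolding h_def using abs_dist_diff_le[of "f y" "f c" "f x"] by (simp add: dist_commute)
        also have "\<dots> \<le> real (Suc k) * e * \<bar>y - x\<bar>" using \<rho>(2)[OF yab y(2)] .
        finally show "\<bar>h y - h x\<bar> \<le> real (Suc k) * e * \<bar>y - x\<bar>" .
      qed (use \<rho> in auto)
    next
      fix Z assume Z: "Z \<subseteq> Ek k" "negligible Z"
      have "Z \<subseteq> {a..b}" using Z(1) EkE[of k] EG G(2) by blast
      then show "negligible (h ` Z)"
        unfolding h_def using Z(2) by (rule null_img[OF PN])
    qed
    then obtain T where T: "\<And>k. h ` Ek k \<subseteq> T k" "\<And>k. T k \<in> lmeasurable"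
      "\<And>k. measure lebesgue (T k) \<le> (real (Suc k) * e) * (measure lebesgue (Ek k) + (1/2)^k / real (Suc k))"
      by metis
    have EkT: "x \<in> E \<Longrightarrow> x \<in> Ek (nat \<lfloor>g x / e\<rfloor>)" for x
    proof -
      assume x: "x \<in> E"
      have fl: "real (nat \<lfloor>g x / e\<rfloor>) = of_int \<lfloor>g x / e\<rfloor>"
        using g0[of x] e by simp
      have "of_int \<lfloor>g x / e\<rfloor> \<le> g x / e" "g x / e < of_int \<lfloor>g x / e\<rfloor> + 1"
        by linarith+
      then have "of_int \<lfloor>g x / e\<rfloor> * e \<le> g x" "g x < (of_int \<lfloor>g x / e\<rfloor> + 1) * e"
        using e by (simp_all only: pos_le_divide_eq pos_divide_less_eq)
      then show ?thesis using x fl unfolding Ek_def by (auto simp: add.commute)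
    qed
    have Ecov: "h ` E \<subseteq> (\<Union>k. T k)"
      using EkT T(1) by blast
    define Z where "Z = {c..d} - E"
    have Zsub: "Z \<subseteq> ({a..b} - G) \<union> {d}" using cd unfolding Z_def E_def by auto
    have Zneg: "negligible Z"
      by (rule negligible_subset[OF _ Zsub]) (use G(3) in auto)
    have hZ: "negligible (h ` Z)"
      unfolding h_def by (rule null_img[OF PN _ Zneg]) (use cd in \<open>auto simp: Z_def\<close>)
    have contcd: "continuous_on {c..d} f" by (rule continuous_on_subset[OF cont]) (use cd in auto)
    have "{0..D} \<subseteq> h ` {c..d}"
      unfolding D_def h_def using ivt_dist[OF contcd cd(2)] .
    also have "\<dots> \<subseteq> h ` E \<union> h ` Z" unfolding Z_def by auto
    also have "\<dots> \<subseteq> (\<Union>k. T k) \<union> h ` Z" using Ecov by auto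
    finally have cov: "{0..D} \<subseteq> (\<Union>k. T k) \<union> h ` Z" .
    have UTm: "(\<Union>k. T k) \<in> sets lebesgue" using T(2) by (auto simp: fmeasurableD)
    have hZm: "h ` Z \<in> null_sets lebesgue" using hZ by (simp add: negligible_iff_null_sets)
    have Ipos: "0 \<le> I" unfolding I_def using g0 by (intro integral_nonneg_AE) (auto simp: indicator_def)
    have sum1: "(\<Sum>k. ennreal (real (Suc k) * e * measure lebesgue (Ek k))) \<le> ennreal (I + e * (d - c))"
    proof -
      have gem: "(\<lambda>x. ennreal (g x + e)) \<in> borel_measurable lebesgue" using gm by measurable
      have "(\<Sum>k. ennreal (real (Suc k) * e * measure lebesgue (Ek k))) \<le>
            (\<Sum>k. \<integral>\<^sup>+x. ennreal (g x + e) * indicator (Ek k) x \<partial>lebesgue)"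
      proof (rule suminf_le)
        fix k
        have "ennreal (real (Suc k) * e * measure lebesgue (Ek k)) = ennreal (real (Suc k) * e) * emeasure lebesgue (Ek k)"
          using e Ekl[of k] by (simp add: emeasure_eq_measure2 ennreal_mult)
        also have "\<dots> = (\<integral>\<^sup>+x. ennreal (real (Suc k) * e) * indicator (Ek k) x \<partial>lebesgue)"
          using Ekm[of k] by (simp add: nn_integral_cmult_indicator)
        also have "\<dots> \<le> (\<integral>\<^sup>+x. ennreal (g x + e) * indicator (Ek k) x \<partial>lebesgue)"
        proof (intro nn_integral_mono)
          fix x
          show "ennreal (real (Suc k) * e) * indicator (Ek k) x \<le> ennreal (g x + e) * indicator (Ek k) x"
          proof (cases "x \<in> Ek k")
            case True
            then have "real (Suc k) * e \<le> g x + e" unfolding Ek_def by (auto simp: algebra_simps)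
            then show ?thesis using True by (simp add: ennreal_leI del: ennreal_plus)
          qed simp
        qed
        finally show "ennreal (real (Suc k) * e * measure lebesgue (Ek k)) \<le> (\<integral>\<^sup>+x. ennreal (g x + e) * indicator (Ek k) x \<partial>lebesgue)" .
      qed auto
      also have "\<dots> = (\<integral>\<^sup>+x. (\<Sum>k. ennreal (g x + e) * indicator (Ek k) x) \<partial>lebesgue)"
        by (rule nn_integral_suminf[symmetric]) (use gem Ekm in auto)
      also have "\<dots> = (\<integral>\<^sup>+x. ennreal (g x + e) * indicator E x \<partial>lebesgue)"
      proof (rule nn_integral_cong)
        fix x
        have disj: "disjoint_family Ek"
          unfolding disjoint_family_on_def Ek_def
        proof (intro ballI impI)
          fix m n :: nat assume "m \<noteq> n"
          then have "real (Suc m) \<le> real n \<or> real (Suc n) \<le> real m" by linarith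
          then show "{x \<in> E. real m * e \<le> g x \<and> g x < real (Suc m) * e} \<inter> {x \<in> E. real n * e \<le> g x \<and> g x < real (Suc n) * e} = {}"
            using e by (auto dest: mult_right_mono[of _ _ e])
        qed
        have UE: "(\<Union>k. Ek k) = E" using EkT EkE by blast
        show "(\<Sum>k. ennreal (g x + e) * indicator (Ek k) x) = ennreal (g x + e) * indicator E x"
          using suminf_indicator[OF disj, of x] UE by (simp add: ennreal_suminf_cmult)
      qed
      also have "\<dots> \<le> (\<integral>\<^sup>+x. ennreal (indicator {c..<d} x * g x + e * indicator {c..<d} x) \<partial>lebesgue)"
        by (intro nn_integral_mono) (use Ecd g0 e in \<open>auto simp: indicator_def\<close>)
      also have "\<dots> = ennreal (integral\<^sup>L lebesgue (\<lambda>x. indicator {c..<d} x * g x + e * indicator {c..<d} x))"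
      proof (rule nn_integral_eq_integral)
        have "integrable lebesgue (indicat_real {c..<d})"
          using cd by (intro integrable_real_indicator) (auto simp: emeasure_completion)
        then show "integrable lebesgue (\<lambda>x. indicator {c..<d} x * g x + e * indicator {c..<d} x)"
          using icg by (intro Bochner_Integration.integrable_add integrable_mult_right)
        show "AE x in lebesgue. 0 \<le> indicator {c..<d} x * g x + e * indicator {c..<d} x"
          using g0 e by (auto simp: indicator_def)
      qed
      also have "integral\<^sup>L lebesgue (\<lambda>x. indicator {c..<d} x * g x + e * indicator {c..<d} x) = I + e * (d - c)"
      proof -
        have ii: "integrable lebesgue (indicat_real {c..<d})"
          using cd by (intro integrable_real_indicator) (auto simp: emeasure_completion)
        have "integral\<^sup>L lebesgue (\<lambda>x. indicator {c..<d} x * g x + e * indicator {c..<d} x)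
              = I + e * integral\<^sup>L lebesgue (indicat_real {c..<d})"
          unfolding I_def using icg ii by (subst Bochner_Integration.integral_add) auto
        also have "integral\<^sup>L lebesgue (indicat_real {c..<d}) = d - c"
          using cd by (simp add: integral_indicator measure_completion)
        finally show ?thesis .
      qed
      finally show ?thesis .
    qed
    have sum2: "(\<Sum>k. ennreal (e * (1/2)^k)) = ennreal (2 * e)"
    proof -
      have "summable (\<lambda>k. e * (1/2::real)^k)" by (intro summable_mult summable_geometric) simp
      moreover have "(\<Sum>k. e * (1/2::real)^k) = 2 * e"
        by (subst suminf_mult[OF summable_geometric]) (auto simp: suminf_geometric)
      ultimately show ?thesis using e by (subst suminf_ennreal2) auto
    qed
    have "ennreal D = emeasure lebesgue {0..D}"
      using Dpos by (simp add: emeasure_lebesgue_Icc)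
    also have "\<dots> \<le> emeasure lebesgue ((\<Union>k. T k) \<union> h ` Z)"
      using cov UTm hZm by (intro emeasure_mono) auto
    also have "\<dots> = emeasure lebesgue (\<Union>k. T k)"
      using UTm hZm by (rule emeasure_Un_null_set)
    also have "\<dots> \<le> (\<Sum>k. emeasure lebesgue (T k))"
      by (rule emeasure_subadditive_countably) (use T(2) in \<open>auto simp: fmeasurableD\<close>)
    also have "\<dots> \<le> (\<Sum>k. ennreal (real (Suc k) * e * measure lebesgue (Ek k)) + ennreal (e * (1/2)^k))"
    proof (rule suminf_le)
      fix k
      have "measure lebesgue (T k) \<le> real (Suc k) * e * measure lebesgue (Ek k) + e * (1/2)^k"
      proof -
        have "real (Suc k) * e * (measure lebesgue (Ek k) + (1/2)^k / real (Suc k))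
            = real (Suc k) * e * measure lebesgue (Ek k) + e * (1/2)^k"
          by (simp add: distrib_left del: of_nat_Suc)
        then show ?thesis using T(3)[of k] by linarith
      qed
      then show "emeasure lebesgue (T k) \<le> ennreal (real (Suc k) * e * measure lebesgue (Ek k)) + ennreal (e * (1/2)^k)"
        using T(2)[of k] e by (simp add: emeasure_eq_measure2 ennreal_plus[symmetric] del: ennreal_plus)
    qed auto
    also have "\<dots> = (\<Sum>k. ennreal (real (Suc k) * e * measure lebesgue (Ek k))) + (\<Sum>k. ennreal (e * (1/2)^k))"
      by (rule suminf_add[symmetric]) auto
    also have "\<dots> \<le> ennreal (I + e * (d - c)) + ennreal (2 * e)"
      using sum1 sum2 by (intro add_mono) auto
    also have "\<dots> = ennreal (I + e * (d - c + 2))"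
    proof -
      have B: "0 \<le> e * (d - c)" using e cd by simp
      have A: "0 \<le> I + e * (d - c)" using Ipos B by linarith
      have "ennreal (I + e * (d - c)) + ennreal (2 * e) = ennreal (I + e * (d - c) + 2 * e)"
        by (rule ennreal_plus[symmetric]) (use A e in auto)
      also have "\<dots> = ennreal (I + e * (d - c + 2))"
        by (rule arg_cong[where f=ennreal]) (simp add: algebra_simps)
      finally show ?thesis .
    qed
    finally show ?thesis
      using Ipos e cd by (subst (asm) ennreal_le_iff) auto
  qed
  have "D \<le> I"
  proof (rule field_le_epsilon)
    fix e :: real assume e: "0 < e"
    have pos: "0 < d - c + 2" using cd by simp
    have "D \<le> I + e / (d - c + 2) * (d - c + 2)"
      using key[of "e / (d - c + 2)"] e pos by simp
    then show "D \<le> I + e" using pos by simp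
  qed
  then show ?thesis unfolding D_def I_def .
qed

lemma ac_int:
  fixes g :: "real \<Rightarrow> real"
  assumes gi: "integrable lebesgue g" and g0: "\<And>x. 0 \<le> g x" and eps: "\<epsilon> > 0"
  shows "\<exists>\<delta>>0. \<forall>A. A \<in> lmeasurable \<and> measure lebesgue A < \<delta> \<longrightarrow> integral\<^sup>L lebesgue (\<lambda>x. indicator A x * g x) < \<epsilon>"
proof -
  have gm: "g \<in> borel_measurable lebesgue" using gi by (rule borel_measurable_integrable)
  define s where "s N x = g x - min (g x) (real N)" for N :: nat and x
  have sm: "s N \<in> borel_measurable lebesgue" for N unfolding s_def using gm by measurable
  have s0: "0 \<le> s N x" "s N x \<le> g x" for N x unfolding s_def using g0[of x] by auto
  have si: "integrable lebesgue (s N)" for N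
    by (rule Bochner_Integration.integrable_bound[OF gi sm]) (use s0 g0 in \<open>auto intro: order_trans\<close>)
  have lim: "AE x in lebesgue. (\<lambda>N. s N x) \<longlonglongrightarrow> 0"
  proof (intro AE_I2 tendsto_eventually)
    fix x
    show "\<forall>\<^sub>F N in sequentially. s N x = 0"
      using eventually_ge_at_top[of "nat \<lceil>g x\<rceil>"]
    proof eventually_elim
      fix N assume "nat \<lceil>g x\<rceil> \<le> N"
      then have "real (nat \<lceil>g x\<rceil>) \<le> real N" by simp
      then have "g x \<le> real N" using real_nat_ceiling_ge[of "g x"] by linarith
      then show "s N x = 0" by (simp add: s_def)
    qed
  qed
  have bnd: "AE x in lebesgue. norm (s N x) \<le> g x" for N using s0 by auto
  note conv = integral_dominated_convergence[of "\<lambda>x. 0::real" lebesgue s g, OF _ sm gi lim bnd]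
  have "(\<lambda>N. integral\<^sup>L lebesgue (s N)) \<longlonglongrightarrow> 0" using conv by simp
  then obtain N where N: "integral\<^sup>L lebesgue (s N) < \<epsilon> / 2"
  proof -
    have "\<forall>\<^sub>F N in sequentially. integral\<^sup>L lebesgue (s N) < \<epsilon> / 2"
      using order_tendstoD(2)[OF \<open>(\<lambda>N. integral\<^sup>L lebesgue (s N)) \<longlonglongrightarrow> 0\<close>, of "\<epsilon>/2"] eps by linarith
    then show ?thesis using that by (auto simp: eventually_sequentially)
  qed
  define \<delta> where "\<delta> = \<epsilon> / (2 * (real N + 1))"
  have \<delta>: "\<delta> > 0" unfolding \<delta>_def using eps by simp
  show ?thesis
  proof (intro exI conjI allI impI)
    fix A :: "real set" assume A: "A \<in> lmeasurable \<and> measure lebesgue A < \<delta>"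
    have Am: "A \<in> sets lebesgue" using A by (auto simp: fmeasurableD)
    have ii: "integrable lebesgue (indicat_real A)"
      using A by (intro integrable_real_indicator) (auto simp: fmeasurable_def)
    have i1: "integrable lebesgue (\<lambda>x. indicator A x * g x)"
      using integrable_mult_indicator[OF Am gi] by simp
    have i2: "integrable lebesgue (\<lambda>x. real N * indicator A x + s N x)"
      using ii si by (intro Bochner_Integration.integrable_add integrable_mult_right) auto
    have "integral\<^sup>L lebesgue (\<lambda>x. indicator A x * g x) \<le> integral\<^sup>L lebesgue (\<lambda>x. real N * indicator A x + s N x)"
      by (rule integral_mono[OF i1 i2]) (auto simp: s_def indicator_def min_def g0)
    also have "\<dots> = real N * measure lebesgue A + integral\<^sup>L lebesgue (s N)"
      using ii si by (simp add: Bochner_Integration.integral_add integral_indicator)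
    also have "real N * measure lebesgue A \<le> real N * \<delta>"
      using A by (intro mult_left_mono) auto
    also have "real N * \<delta> < \<epsilon> / 2"
      unfolding \<delta>_def using eps by (simp add: field_simps)
    finally show "integral\<^sup>L lebesgue (\<lambda>x. indicator A x * g x) < \<epsilon>" using N by linarith
  qed (use \<delta> in auto)
qed


theorem theorem3p7:
  fixes f :: "real \<Rightarrow> 'a::metric_space" and a b :: real
  assumes "a < b"
    and "continuous_on {a..b} f"
    and "AE x in lebesgue_on {a..b}. md_exists f a b x"
    and "integrable (lebesgue_on {a..b}) (md f a b)"
    and "property_N f a b"
  shows "abs_cont_metric f a b"
proof -
  define g where "g x = indicator {a..b} x * \<bar>md f a b x\<bar>" for x
  have i0: "integrable lebesgue (\<lambda>x. indicator {a..b} x *\<^sub>R md f a b x)"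
    using assms(4) integrable_restrict_space[of "{a..b}" lebesgue "md f a b"] by simp
  have geq: "g = (\<lambda>x. \<bar>indicator {a..b} x *\<^sub>R md f a b x\<bar>)"
    by (auto simp: g_def indicator_def fun_eq_iff)
  have gi: "integrable lebesgue g"
    unfolding geq using i0 by (rule integrable_abs)
  have g0: "0 \<le> g x" for x by (simp add: g_def)
  have "AE x in lebesgue. x \<in> {a..b} \<longrightarrow> md_exists f a b x"
    using assms(3) by (subst (asm) AE_restrict_space_iff) auto
  then obtain N where N: "{x \<in> space lebesgue. \<not> (x \<in> {a..b} \<longrightarrow> md_exists f a b x)} \<subseteq> N"
     "emeasure lebesgue N = 0" "N \<in> sets lebesgue"
    by (rule AE_E)
  define G where "G = {a..b} - N"
  have Gs: "G \<in> sets lebesgue" unfolding G_def using N(3) by auto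
  have Gab: "G \<subseteq> {a..b}" unfolding G_def by auto
  have Nneg: "negligible N" using N(2,3) by (simp add: negligible_iff_null_sets null_sets_def)
  have Gneg: "negligible ({a..b} - G)"
    by (rule negligible_subset[OF Nneg]) (auto simp: G_def)
  have Gmd: "md_exists f a b x" if "x \<in> G" for x
    using that N(1) unfolding G_def by auto
  have gmd: "md f a b x \<le> g x" if "x \<in> G" for x
    using that Gab by (auto simp: g_def)
  have key: "dist (f c) (f d) \<le> integral\<^sup>L lebesgue (\<lambda>x. indicator {c..<d} x * g x)"
    if "a \<le> c" "c \<le> d" "d \<le> b" for c d
    by (rule main_ineq[OF assms(1,2,5) Gs Gab Gneg Gmd gi g0 gmd that])
  show ?thesis
    unfolding abs_cont_metric_def
  proof (intro allI impI)
    fix \<epsilon> :: real assume eps: "\<epsilon> > 0"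
    obtain \<delta> where \<delta>: "\<delta> > 0" "\<And>A. A \<in> lmeasurable \<Longrightarrow> measure lebesgue A < \<delta> \<Longrightarrow>
        integral\<^sup>L lebesgue (\<lambda>x. indicator A x * g x) < \<epsilon>"
      using ac_int[OF gi g0 eps] by blast
    show "\<exists>\<delta>>0. \<forall>(n::nat) as bs. (\<forall>i<n. a \<le> as i \<and> as i \<le> bs i \<and> bs i \<le> b) \<and>
        (\<forall>i<n. \<forall>j<n. i \<noteq> j \<longrightarrow> bs i \<le> as j \<or> bs j \<le> as i) \<and> (\<Sum>i<n. bs i - as i) < \<delta> \<longrightarrow>
        (\<Sum>i<n. dist (f (bs i)) (f (as i))) < \<epsilon>"
    proof (intro exI conjI allI impI)
      show "\<delta> > 0" by (rule \<delta>(1))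
      fix n :: nat and as bs :: "nat \<Rightarrow> real"
      assume H: "(\<forall>i<n. a \<le> as i \<and> as i \<le> bs i \<and> bs i \<le> b) \<and>
        (\<forall>i<n. \<forall>j<n. i \<noteq> j \<longrightarrow> bs i \<le> as j \<or> bs j \<le> as i) \<and> (\<Sum>i<n. bs i - as i) < \<delta>"
      define I where "I i = {as i..<bs i}" for i
      define A where "A = (\<Union>i<n. I i)"
      have disj: "disjoint_family_on I {..<n}"
        unfolding disjoint_family_on_def I_def
      proof (intro ballI impI)
        fix i j assume "i \<in> {..<n}" "j \<in> {..<n}" "i \<noteq> j"
        then have "bs i \<le> as j \<or> bs j \<le> as i" using H by blast
        then show "{as i..<bs i} \<inter> {as j..<bs j} = {}" by auto
      qed
      have Ii: "integrable lebesgue (\<lambda>x. indicator (I i) x * g x)" for i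
        using integrable_mult_indicator[OF _ gi, of "I i"] by (simp add: I_def)
      have "(\<Sum>i<n. dist (f (bs i)) (f (as i))) \<le> (\<Sum>i<n. integral\<^sup>L lebesgue (\<lambda>x. indicator (I i) x * g x))"
      proof (rule sum_mono)
        fix i assume "i \<in> {..<n}"
        then have "a \<le> as i" "as i \<le> bs i" "bs i \<le> b" using H by auto
        then show "dist (f (bs i)) (f (as i)) \<le> integral\<^sup>L lebesgue (\<lambda>x. indicator (I i) x * g x)"
          using key[of "as i" "bs i"] by (simp add: dist_commute I_def)
      qed
      also have "\<dots> = integral\<^sup>L lebesgue (\<lambda>x. \<Sum>i<n. indicator (I i) x * g x)"
        by (rule Bochner_Integration.integral_sum[symmetric]) (use Ii in auto)
      also have "\<dots> = integral\<^sup>L lebesgue (\<lambda>x. indicator A x * g x)"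
      proof (rule Bochner_Integration.integral_cong[OF refl])
        fix x
        have "indicator A x = (\<Sum>i<n. indicator (I i) x :: real)"
          unfolding A_def by (rule indicator_UN_disjoint) (use disj in auto)
        then show "(\<Sum>i<n. indicator (I i) x * g x) = indicator A x * g x"
          by (simp add: sum_distrib_right)
      qed
      also have "\<dots> < \<epsilon>"
      proof (rule \<delta>(2))
        have "bounded A" unfolding A_def I_def
          by (rule bounded_subset[of "{a..b}"]) (use H in \<open>auto simp: less_imp_le\<close>)
        moreover have "A \<in> sets lebesgue" unfolding A_def I_def by auto
        ultimately show Al: "A \<in> lmeasurable" by (rule bounded_set_imp_lmeasurable)
        have "measure lebesgue A \<le> (\<Sum>i<n. measure lebesgue (I i))"
          unfolding A_def by (rule measure_UNION_le) (auto simp: I_def)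
        also have "\<dots> = (\<Sum>i<n. bs i - as i)"
        proof (rule sum.cong[OF refl])
          fix i assume "i \<in> {..<n}"
          then have "as i \<le> bs i" using H by auto
          then show "measure lebesgue (I i) = bs i - as i"
            by (simp add: I_def measure_completion)
        qed
        finally show "measure lebesgue A < \<delta>" using H by linarith
      qed
      finally show "(\<Sum>i<n. dist (f (bs i)) (f (as i))) < \<epsilon>" .
    qed
  qed
qed
end
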